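(* Let $a,b,c>0$ and let $\lambda_0>0>\lambda_1$, $\lambda_2>0$ be the three real roots of $p_3(\lambda)=\lambda^3-b\lambda^2-(a+c)\lambda+cb$, labeled so that $\lambda_0\in(\max(b,\sqrt c),\infty)$, $\lambda_1\in(-\infty,-\sqrt c)$, $\lambda_2\in(0,\min(b,\sqrt c))$. Set $d_0^\pm=\lambda_1\pm\lambda_2$, $d_1^\pm=\lambda_0\pm\lambda_2$, $d_2^\pm=\lambda_0\pm\lambda_1$. For $L\ge0$ define the $2\times2$ matrix $C^0=(c_{ij})$ by $$c_{11}=\sum_{k=0}^2(-1)^k\lambda_k^2\frac{d_k^-}{d_k^+}e^{\lambda_kL},\quad c_{12}=\sum_{k=0}^2(-1)^k\lambda_k d_k^-e^{\lambda_kL},$$ $$c_{21}=\sum_{k=0}^2(-1)^k(a+b\lambda_k)d_k^-e^{\lambda_kL},\quad c_{22}=\sum_{k=0}^2(-1)^k\frac{a+b\lambda_k}{\lambda_k}d_k^-d_k^+e^{\lambda_kL}.$$ Then $\det(C^0)>0$ for all $L\ge0$; in particular $C^0$ is regular, so the linear system $C^0 s=\mathbf b$ with $\mathbf b=(0,-\gamma a d_0^-d_1^-d_2^-/c)^T$ has a unique solution $s=(s_1,s_2)^T$ for every $\gamma\in\mathbb R$.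
   Context: In the paper this system determines the shooting parameters $s_1=T_f'(0)$, $s_2=T_s'(0)$ of a two-temperature boundary value problem; $\gamma$ is a real parameter. *)

theory Defs
  imports "HOL-Analysis.Analysis"
begin

definition p3 :: "real \<Rightarrow> real \<Rightarrow> real \<Rightarrow> real \<Rightarrow> real" where
  "p3 a b c x = x^3 - b * x^2 - (a + c) * x + c * b"

definition dminus :: "(nat \<Rightarrow> real) \<Rightarrow> nat \<Rightarrow> real" where
  "dminus lam k = (if k = 0 then lam 1 - lam 2 else if k = 1 then lam 0 - lam 2 else lam 0 - lam 1)"

definition dplus :: "(nat \<Rightarrow> real) \<Rightarrow> nat \<Rightarrow> real" where
  "dplus lam k = (if k = 0 then lam 1 + lam 2 else if k = 1 then lam 0 + lam 2 else lam 0 + lam 1)"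

definition C0 :: "real \<Rightarrow> real \<Rightarrow> (nat \<Rightarrow> real) \<Rightarrow> real \<Rightarrow> real^2^2" where
  "C0 a b lam L = vector [
     vector [ (\<Sum>k=0..2. (-1)^k * (lam k)^2 * (dminus lam k / dplus lam k) * exp (lam k * L)),
              (\<Sum>k=0..2. (-1)^k * lam k * dminus lam k * exp (lam k * L)) ],
     vector [ (\<Sum>k=0..2. (-1)^k * (a + b * lam k) * dminus lam k * exp (lam k * L)),
              (\<Sum>k=0..2. (-1)^k * ((a + b * lam k) / lam k) * dminus lam k * dplus lam k * exp (lam k * L)) ]]"

definition rhs :: "real \<Rightarrow> real \<Rightarrow> (nat \<Rightarrow> real) \<Rightarrow> real \<Rightarrow> real^2" where
  "rhs a c lam \<gamma> = vector [0, - \<gamma> * a * dminus lam 0 * dminus lam 1 * dminus lam 2 / c]"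

end

theory Submission
  imports Defs
begin

lemma det_pairs:
  fixes al0 al1 al2 l0 l1 l2 P0 P1 P2 R0 R1 R2 :: real
  assumes "l0 \<noteq> 0" "l1 \<noteq> 0" "l2 \<noteq> 0" "P0 \<noteq> 0" "P1 \<noteq> 0" "P2 \<noteq> 0"
  shows "(al0*l0^2/P0 + al1*l1^2/P1 + al2*l2^2/P2) * (al0*R0*P0/l0 + al1*R1*P1/l1 + al2*R2*P2/l2)
       - (al0*l0 + al1*l1 + al2*l2) * (al0*R0 + al1*R1 + al2*R2)
     = al0*al1*(l0*P1-l1*P0)*(l0^2*R1*P1-l1^2*R0*P0)/(P0*P1*l0*l1)
     + al0*al2*(l0*P2-l2*P0)*(l0^2*R2*P2-l2^2*R0*P0)/(P0*P2*l0*l2)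
     + al1*al2*(l1*P2-l2*P1)*(l1^2*R2*P2-l2^2*R1*P1)/(P1*P2*l1*l2)"
  using assms by (simp add: field_simps) (simp add: algebra_simps power2_eq_square)

lemma Qrel:
  fixes a b c u w m :: real
  assumes "u + w + m = b" "u*w*m = -c*b" "p3 a b c m = 0"
  shows "(a*b*(u+w) + (b^2-a)*u*w) * m^2 = b*(a*b*c - m*(a^2+b^2*c))"
proof -
  have e1: "u + w = b - m" using assms(1) by simp
  have "(a*b*(u+w) + (b^2-a)*u*w) * m^2 = a*b*(u+w)*m^2 + (b^2-a)*(u*w*m)*m"
    by (simp add: algebra_simps power2_eq_square)
  also have "\<dots> = a*b*(b-m)*m^2 + (b^2-a)*(-c*b)*m" using e1 assms(2) by simp
  also have "\<dots> = b*(a*b*c - m*(a^2+b^2*c)) - a*b*p3 a b c m"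
    unfolding p3_def by (simp add: algebra_simps power2_eq_square power3_eq_cube)
  finally show ?thesis using assms(3) by simp
qed

lemma numer:
  fixes a b c u w m :: real
  assumes "u + w + m = b" "u*w*m = -c*b" "p3 a b c m = 0"
  shows "(u*(b-w)-w*(b-u))*(u^2*(a+b*w)*(b-w)-w^2*(a+b*u)*(b-u)) * m^2
       = b^2*(u-w)^2*(a*b*c - m*(a^2+b^2*c))"
proof -
  have "(u*(b-w)-w*(b-u))*(u^2*(a+b*w)*(b-w)-w^2*(a+b*u)*(b-u)) * m^2
      = b*(u-w)^2*((a*b*(u+w) + (b^2-a)*u*w) * m^2)" by algebra
  also have "\<dots> = b^2*(u-w)^2*(a*b*c - m*(a^2+b^2*c))" using Qrel[OF assms] by (simp add: power2_eq_square)
  finally show ?thesis .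
qed



lemma sum3: "(\<Sum>k=0..(2::nat). f k) = f 0 + f 1 + (f 2 :: real)"
  by (simp add: numeral_2_eq_2)

theorem lemma1:
  fixes a b c :: real and lam :: "nat \<Rightarrow> real"
  assumes "a > 0" and "b > 0" and "c > 0"
    and "p3 a b c (lam 0) = 0" and "p3 a b c (lam 1) = 0" and "p3 a b c (lam 2) = 0"
    and "lam 0 > max b (sqrt c)"
    and "lam 1 < - sqrt c"
    and "0 < lam 2" and "lam 2 < min b (sqrt c)"
  shows "\<forall>L::real. L \<ge> 0 \<longrightarrow>
           det (C0 a b lam L) > 0 \<and> (\<forall>\<gamma>::real. \<exists>!s::real^2. C0 a b lam L *v s = rhs a c lam \<gamma>)"
proof (intro allI impI)
  fix L :: real assume L: "L \<ge> 0"
  define x where "x = lam 0"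
  define y where "y = lam 1"
  define z where "z = lam 2"
  define sc where "sc = sqrt c"
  have sc2: "sc^2 = c" "sc > 0" using assms(3) by (auto simp: sc_def)
  have px: "p3 a b c x = 0" and py: "p3 a b c y = 0" and pz: "p3 a b c z = 0"
    using assms(4-6) by (auto simp: x_def y_def z_def)
  have xb: "x > b" and xs: "x > sc" and ys: "y < - sc" and z0: "z > 0" and zb: "z < b" and zs: "z < sc"
    using assms(7-10) by (auto simp: x_def y_def z_def sc_def)
  have y0: "y < 0" using ys sc2 by linarith
  have x0: "x > 0" using xs sc2 by linarith
  have xy: "x \<noteq> y" and xz: "x \<noteq> z" and yz: "y \<noteq> z" using x0 y0 z0 xb zb by auto
  have "(x-y)*(x^2+x*y+y^2-b*(x+y)-(a+c)) = p3 a b c x - p3 a b c y"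
    unfolding p3_def by (simp add: algebra_simps power2_eq_square power3_eq_cube)
  then have Sxy: "x^2+x*y+y^2-b*(x+y) = a+c" using px py xy by simp
  have "(x-z)*(x^2+x*z+z^2-b*(x+z)-(a+c)) = p3 a b c x - p3 a b c z"
    unfolding p3_def by (simp add: algebra_simps power2_eq_square power3_eq_cube)
  then have Sxz: "x^2+x*z+z^2-b*(x+z) = a+c" using px pz xz by simp
  have "(y-z)*(x+y+z-b) = (x^2+x*y+y^2-b*(x+y)) - (x^2+x*z+z^2-b*(x+z))"
    by (simp add: algebra_simps power2_eq_square)
  then have hb: "b = x+y+z" using Sxy Sxz yz by simp
  have h3: "x*y*z = -c*b"
  proof -
    have "p3 a b c x = x*y*z + c*b" using Sxy hb unfolding p3_def
      by (simp add: algebra_simps power2_eq_square power3_eq_cube) algebra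
    then show ?thesis using px by simp
  qed
  have xpy: "x + y > 0" using hb zb by linarith
  have ypz: "y + z < 0" using ys zs by linarith
  have xpz: "x + z > 0" using x0 z0 by linarith
  have xgz: "x > z" using xb zb by linarith
  have zy2: "z^2 < y^2"
  proof -
    have "z^2 < sc^2" using z0 zs by (simp add: power_strict_mono)
    moreover have "sc^2 < (-y)^2" using ys sc2(2) by (intro power_strict_mono) auto
    ultimately show ?thesis by simp
  qed
  have xy2: "y^2 < x^2"
  proof -
    have "(-y)^2 < x^2" using xpy y0 by (intro power_strict_mono) auto
    then show ?thesis by simp
  qed
  have xz2: "z^2 < x^2" using xgz z0 by (simp add: power_strict_mono)
  define Q where "Q = (\<lambda>m::real. a*b*c - m*(a^2+b^2*c))"
  define K where "K = a^2+b^2*c"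
  define B01 where "B01 = -(x^2-y^2)*Q z/z"
  define B02 where "B02 = (x^2-z^2)*Q y/y"
  define B12 where "B12 = -(y^2-z^2)*Q x/x"
  have abc: "a*b*c > 0" using assms(1-3) by simp
  have K0: "K > 0" using assms(1-3) unfolding K_def by (simp add: add_pos_pos)
  have sB02: "B02 < 0"
  proof -
    have "Q y / y = a*b*c/y - K" using y0 by (simp add: Q_def K_def field_simps)
    moreover have "a*b*c/y < 0" using abc y0 by (simp add: divide_pos_neg)
    ultimately have "Q y / y < 0" using K0 by linarith
    moreover have "(x^2-z^2) > 0" using xz2 by simp
    ultimately have "(x^2-z^2) * (Q y / y) < 0" using mult_pos_neg by blast
    then show ?thesis unfolding B02_def by (metis times_divide_eq_right)
  qed
  have sB0201: "B02 + B01 < 0"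
  proof -
    have "B02 + B01 = a*b*c*((x^2-z^2)/y - (x^2-y^2)/z) + K*(z^2-y^2)"
      using y0 z0 by (simp add: B02_def B01_def Q_def K_def field_simps)
    moreover have "(x^2-z^2)/y < 0" using xz2 y0 by (simp add: divide_pos_neg)
    moreover have "(x^2-y^2)/z > 0" using xy2 z0 by simp
    moreover have "K*(z^2-y^2) < 0" using K0 zy2 by (simp add: mult_pos_neg)
    ultimately show ?thesis using abc
      by (smt (verit) mult_pos_neg)
  qed
  have sBall: "B02 + B01 + B12 < 0"
  proof -
    have "B02 + B01 + B12 = a*b*c*((x-y)*(y-z)*(z-x)*(x+y+z))/(x*y*z)"
      using x0 y0 z0 by (simp add: B02_def B01_def B12_def Q_def field_simps) (simp add: algebra_simps power2_eq_square)
    moreover have "(x-y)*(y-z)*(z-x)*(x+y+z) > 0"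
    proof -
      have "(x-y)*(y-z) < 0" using y0 x0 z0 by (intro mult_pos_neg) auto
      then have "(x-y)*(y-z)*(z-x) > 0" using xgz by (intro mult_neg_neg) auto
      moreover have "x+y+z > 0" using hb assms(2) by simp
      ultimately show ?thesis using mult_pos_pos by blast
    qed
    moreover have "x*y*z < 0" using x0 y0 z0 by (simp add: mult_pos_neg mult_neg_pos)
    ultimately show ?thesis using abc by (simp add: divide_pos_neg)
  qed
  define E0 where "E0 = exp (x*L)"
  define E1 where "E1 = exp (y*L)"
  define E2 where "E2 = exp (z*L)"
  define al0 where "al0 = (y-z)*E0"
  define al1 where "al1 = -((x-z)*E1)"
  define al2 where "al2 = (x-y)*E2"
  have lx: "lam 0 = x" and ly: "lam 1 = y" and lz: "lam 2 = z" and ly': "lam (Suc 0) = y" by (simp_all add: x_def y_def z_def)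
  have c11: "C0 a b lam L $1$1 = al0*x^2/(y+z) + al1*y^2/(x+z) + al2*z^2/(x+y)"
    by (simp add: C0_def sum3 dminus_def dplus_def lx ly ly' lz al0_def al1_def al2_def E0_def E1_def E2_def mult_ac)
  have c12: "C0 a b lam L $1$2 = al0*x + al1*y + al2*z"
    by (simp add: C0_def sum3 dminus_def dplus_def lx ly ly' lz al0_def al1_def al2_def E0_def E1_def E2_def mult_ac)
  have c21: "C0 a b lam L $2$1 = al0*(a+b*x) + al1*(a+b*y) + al2*(a+b*z)"
    by (simp add: C0_def sum3 dminus_def dplus_def lx ly ly' lz al0_def al1_def al2_def E0_def E1_def E2_def mult_ac)
  have c22: "C0 a b lam L $2$2 = al0*(a+b*x)*(y+z)/x + al1*(a+b*y)*(x+z)/y + al2*(a+b*z)*(x+y)/z"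
    by (simp add: C0_def sum3 dminus_def dplus_def lx ly ly' lz al0_def al1_def al2_def E0_def E1_def E2_def mult_ac)
  have nz: "x \<noteq> 0" "y \<noteq> 0" "z \<noteq> 0" "y+z \<noteq> 0" "x+z \<noteq> 0" "x+y \<noteq> 0"
    using x0 y0 z0 ypz xpz xpy by auto
  have detf: "det (C0 a b lam L) =
       al0*al1*((x*(x+z)-y*(y+z))*(x^2*(a+b*y)*(x+z)-y^2*(a+b*x)*(y+z)))/((y+z)*(x+z)*x*y)
     + al0*al2*((x*(x+y)-z*(y+z))*(x^2*(a+b*z)*(x+y)-z^2*(a+b*x)*(y+z)))/((y+z)*(x+y)*x*z)
     + al1*al2*((y*(x+y)-z*(x+z))*(y^2*(a+b*z)*(x+y)-z^2*(a+b*y)*(x+z)))/((x+z)*(x+y)*y*z)"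
    unfolding det_2 c11 c12 c21 c22
    using det_pairs[OF nz, of al0 al1 al2 "a+b*x" "a+b*y" "a+b*z"] by (simp add: mult.assoc)
  have n01: "(x*(x+z)-y*(y+z))*(x^2*(a+b*y)*(x+z)-y^2*(a+b*x)*(y+z)) * z^2 = b^2*(x-y)^2*Q z"
    using numer[of x y z b c a] hb h3 pz by (simp add: Q_def)
  have n02: "(x*(x+y)-z*(y+z))*(x^2*(a+b*z)*(x+y)-z^2*(a+b*x)*(y+z)) * y^2 = b^2*(x-z)^2*Q y"
    using numer[of x z y b c a] hb h3 py by (simp add: Q_def algebra_simps)
  have n12: "(y*(x+y)-z*(x+z))*(y^2*(a+b*z)*(x+y)-z^2*(a+b*y)*(x+z)) * x^2 = b^2*(y-z)^2*Q x"
    using numer[of y z x b c a] hb h3 px by (simp add: Q_def algebra_simps)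
  define \<kappa> where "\<kappa> = (y-z)*(x-z)*(x-y)*b^2/(x*y*z*(x+y)*(y+z)*(x+z))"
  have fr: "\<And>p X w D :: real. p*(X/w)/D = (p*X)/(w*D)" by simp
  have t01: "al0*al1*((x*(x+z)-y*(y+z))*(x^2*(a+b*y)*(x+z)-y^2*(a+b*x)*(y+z)))/((y+z)*(x+z)*x*y)
      = \<kappa>*B01*(E0*E1)"
  proof -
    have N: "(x*(x+z)-y*(y+z))*(x^2*(a+b*y)*(x+z)-y^2*(a+b*x)*(y+z)) = b^2*(x-y)^2*Q z/z^2"
      using n01 nz by (simp add: field_simps)
    have R: "\<kappa>*B01*(E0*E1) = ((y-z)*(x-z)*(x-y)*b^2 * (-(x^2-y^2)*Q z) * (E0*E1)) / ((x*y*z*(x+y)*(y+z)*(x+z))*z)"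
      unfolding \<kappa>_def B01_def by simp
    show ?thesis unfolding N R fr al0_def al1_def
      apply (subst frac_eq_eq)
        apply (simp add: nz)
       apply (simp add: nz)
      apply (simp add: algebra_simps power2_eq_square)
      done
  qed
  have t02: "al0*al2*((x*(x+y)-z*(y+z))*(x^2*(a+b*z)*(x+y)-z^2*(a+b*x)*(y+z)))/((y+z)*(x+y)*x*z)
      = \<kappa>*B02*(E0*E2)"
  proof -
    have N: "(x*(x+y)-z*(y+z))*(x^2*(a+b*z)*(x+y)-z^2*(a+b*x)*(y+z)) = b^2*(x-z)^2*Q y/y^2"
      using n02 nz by (simp add: field_simps)
    have R: "\<kappa>*B02*(E0*E2) = ((y-z)*(x-z)*(x-y)*b^2 * ((x^2-z^2)*Q y) * (E0*E2)) / ((x*y*z*(x+y)*(y+z)*(x+z))*y)"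
      unfolding \<kappa>_def B02_def by simp
    show ?thesis unfolding N R fr al0_def al2_def
      apply (subst frac_eq_eq)
        apply (simp add: nz)
       apply (simp add: nz)
      apply (simp add: algebra_simps power2_eq_square)
      done
  qed
  have t12: "al1*al2*((y*(x+y)-z*(x+z))*(y^2*(a+b*z)*(x+y)-z^2*(a+b*y)*(x+z)))/((x+z)*(x+y)*y*z)
      = \<kappa>*B12*(E1*E2)"
  proof -
    have N: "(y*(x+y)-z*(x+z))*(y^2*(a+b*z)*(x+y)-z^2*(a+b*y)*(x+z)) = b^2*(y-z)^2*Q x/x^2"
      using n12 nz by (simp add: field_simps)
    have R: "\<kappa>*B12*(E1*E2) = ((y-z)*(x-z)*(x-y)*b^2 * (-(y^2-z^2)*Q x) * (E1*E2)) / ((x*y*z*(x+y)*(y+z)*(x+z))*x)"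
      unfolding \<kappa>_def B12_def by simp
    show ?thesis unfolding N R fr al1_def al2_def
      apply (subst frac_eq_eq)
        apply (simp add: nz)
       apply (simp add: nz)
      apply (simp add: algebra_simps power2_eq_square)
      done
  qed
  have detk: "det (C0 a b lam L) = \<kappa> * (B01*(E0*E1) + B02*(E0*E2) + B12*(E1*E2))"
    unfolding detf t01 t02 t12 by (simp add: algebra_simps)
  have kneg: "\<kappa> < 0"
  proof -
    have D: "(y-z)*(x-z)*(x-y) < 0"
    proof -
      have "(y-z)*(x-z) < 0" using y0 z0 xgz by (intro mult_neg_pos) auto
      moreover have "x - y > 0" using xpy y0 by simp
      ultimately show ?thesis using mult_neg_pos by blast
    qed
    have Db: "(y-z)*(x-z)*(x-y)*b^2 < 0" using D assms(2) by (simp add: mult_neg_pos)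
    have W: "x*y*z*(x+y)*(y+z)*(x+z) > 0"
    proof -
      have "x*y < 0" using x0 y0 by (simp add: mult_pos_neg)
      then have "x*y*z < 0" using z0 by (simp add: mult_neg_pos)
      then have "x*y*z*(x+y) < 0" using xpy by (simp add: mult_neg_pos)
      then have "x*y*z*(x+y)*(y+z) > 0" using ypz by (simp add: mult_neg_neg)
      then show ?thesis using xpz by (simp add: mult_pos_pos)
    qed
    show ?thesis unfolding \<kappa>_def using Db W by (simp add: divide_neg_pos)
  qed
  have e02: "E0*E2 = exp ((x+z)*L)" and e01: "E0*E1 = exp ((x+y)*L)" and e12: "E1*E2 = exp ((y+z)*L)"
    by (simp_all add: E0_def E1_def E2_def distrib_right exp_add)
  have m1: "E0*E1 \<le> E0*E2" unfolding e01 e02 using L xgz y0 z0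
    by (simp add: mult_right_mono)
  have m2: "E1*E2 \<le> E0*E1" unfolding e01 e12 using L xgz
    by (simp add: mult_right_mono)
  have p12: "E1*E2 > 0" unfolding e12 by simp
  have br: "B01*(E0*E1) + B02*(E0*E2) + B12*(E1*E2)
       = (E0*E2 - E0*E1)*B02 + (E0*E1 - E1*E2)*(B02+B01) + (E1*E2)*(B02+B01+B12)"
    by (simp add: algebra_simps)
  have "(E0*E2 - E0*E1)*B02 \<le> 0" using m1 sB02 by (simp add: mult_nonneg_nonpos)
  moreover have "(E0*E1 - E1*E2)*(B02+B01) \<le> 0" using m2 sB0201 by (simp add: mult_nonneg_nonpos)
  moreover have "(E1*E2)*(B02+B01+B12) < 0" using p12 sBall by (simp add: mult_pos_neg)
  ultimately have brn: "B01*(E0*E1) + B02*(E0*E2) + B12*(E1*E2) < 0" unfolding br by linarith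
  have dpos: "det (C0 a b lam L) > 0" unfolding detk using kneg brn by (simp add: mult_neg_neg)
  have "invertible (C0 a b lam L)" using dpos invertible_det_nz by force
  then obtain B where B1: "C0 a b lam L ** B = mat 1" and B2: "B ** C0 a b lam L = mat 1"
    unfolding invertible_def by blast
  have uniq: "\<exists>!s::real^2. C0 a b lam L *v s = rhs a c lam \<gamma>" for \<gamma>
  proof
    show "C0 a b lam L *v (B *v rhs a c lam \<gamma>) = rhs a c lam \<gamma>"
      by (simp add: matrix_vector_mul_assoc B1)
  next
    fix s assume "C0 a b lam L *v s = rhs a c lam \<gamma>"
    then have "B *v (C0 a b lam L *v s) = B *v rhs a c lam \<gamma>" by simp
    then show "s = B *v rhs a c lam \<gamma>" by (simp add: matrix_vector_mul_assoc B2)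
  qed
  show "det (C0 a b lam L) > 0 \<and> (\<forall>\<gamma>::real. \<exists>!s::real^2. C0 a b lam L *v s = rhs a c lam \<gamma>)"
    using dpos uniq by blast
qed

end
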